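(* Let $\mathbf A$ be a complete residuated lattice, $I$ a set, and $O\colon A^I\to A^I$ an interior operator satisfying $d^I\cdot O(x)\le O(d^I\cdot x)$ for all $d\in A$ and $x\in A^I$. Then there exist a set $J$ and a fuzzy relation $R\colon I\times J\to A$ such that $O(x)=\rho_R(\phi_R(x))$ for all $x\in A^I$. (One may take $J=\{O(a)\mid a\in A^I\}$ and $R(i,O(a))=O(a)(i)$.)
   Context: A residuated lattice is an algebra $\mathbf A=(A;\vee,\wedge,\cdot,\rightarrow,0,1)$ such that $(A;\vee,\wedge,0,1)$ is a bounded lattice, $(A;\cdot,1)$ is a commutative monoid, and $x\cdot y\le z$ iff $x\le y\rightarrow z$; complete if the lattice reduct is complete. $A^K$ carries componentwise operations and order; $d^K$ is the constant element with value $d\in A$. An interior operator is a monotone $O$ with $O(x)\le x$ and $O(O(x))=O(x)$. For $R\colon I\times J\to A$: $\phi_R\colon A^I\to A^J$, $\phi_R(x)(j)=\bigwedge_{i\in I}(R(i,j)\rightarrow x(i))$; $\rho_R\colon A^J\to A^I$, $\rho_R(y)(i)=\bigvee_{j\in J}(R(i,j)\cdot y(j))$. *)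

theory Defs
  imports Main
begin

text \<open>A complete residuated lattice on a complete lattice type 'a: the lattice
 bounds are bot (0) and top (1); mult is a commutative monoid with unit top,
 and imp is its residuum.\<close>
definition complete_residuated_lattice ::
  "('a::complete_lattice \<Rightarrow> 'a \<Rightarrow> 'a) \<Rightarrow> ('a \<Rightarrow> 'a \<Rightarrow> 'a) \<Rightarrow> bool" where
  "complete_residuated_lattice mult imp \<longleftrightarrow>
     (\<forall>x y z. mult (mult x y) z = mult x (mult y z)) \<and>
     (\<forall>x y. mult x y = mult y x) \<and>
     (\<forall>x. mult x top = x) \<and>
     (\<forall>x y z. mult x y \<le> z \<longleftrightarrow> x \<le> imp y z)"

definition interior_operator :: "('b::order \<Rightarrow> 'b) \<Rightarrow> bool" where
  "interior_operator Op \<longleftrightarrow> mono Op \<and> (\<forall>x. Op x \<le> x) \<and> (\<forall>x. Op (Op x) = Op x)"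

text \<open>phi_R : A^I \<rightarrow> A^J and rho_R : A^J \<rightarrow> A^I for R : I \<times> J \<rightarrow> A,
 with I the universe of type 'i and J an arbitrary set of type 'j.\<close>
definition phi_R ::
  "('a::complete_lattice \<Rightarrow> 'a \<Rightarrow> 'a) \<Rightarrow> ('i \<Rightarrow> 'j \<Rightarrow> 'a) \<Rightarrow> ('i \<Rightarrow> 'a) \<Rightarrow> 'j \<Rightarrow> 'a" where
  "phi_R imp R x j = (INF i. imp (R i j) (x i))"

definition rho_R ::
  "('a::complete_lattice \<Rightarrow> 'a \<Rightarrow> 'a) \<Rightarrow> ('i \<Rightarrow> 'j \<Rightarrow> 'a) \<Rightarrow> 'j set \<Rightarrow> ('j \<Rightarrow> 'a) \<Rightarrow> 'i \<Rightarrow> 'a" where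
  "rho_R mult R J y i = (SUP j\<in>J. mult (R i j) (y j))"

end

theory Submission
  imports Defs
begin

theorem theorem4:
  fixes mult imp :: "'a::complete_lattice \<Rightarrow> 'a \<Rightarrow> 'a"
    and Op :: "('i \<Rightarrow> 'a) \<Rightarrow> ('i \<Rightarrow> 'a)"
  assumes "complete_residuated_lattice mult imp"
    and "interior_operator Op"
    and "\<forall>d x i. mult d (Op x i) \<le> Op (\<lambda>k. mult d (x k)) i"
  shows "\<exists>(J :: ('i \<Rightarrow> 'a) set) (R :: 'i \<Rightarrow> ('i \<Rightarrow> 'a) \<Rightarrow> 'a).
           \<forall>x. Op x = rho_R mult R J (phi_R imp R x)"
proof -
  have comm: "\<And>x y. mult x y = mult y x" and unit: "\<And>x. mult x top = x"
    and res: "\<And>x y z. mult x y \<le> z \<longleftrightarrow> x \<le> imp y z"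
    using assms(1) unfolding complete_residuated_lattice_def by auto
  have mono: "mono Op" and contr: "\<And>x. Op x \<le> x" and idem: "\<And>x. Op (Op x) = Op x"
    using assms(2) unfolding interior_operator_def by auto
  have key: "\<And>x. Op x = rho_R mult (\<lambda>i y. y i) (range Op) (phi_R imp (\<lambda>i y. y i) x)"
  proof
    fix x i
    show "Op x i = rho_R mult (\<lambda>i y. y i) (range Op) (phi_R imp (\<lambda>i y. y i) x) i"
      unfolding rho_R_def phi_R_def
    proof (rule antisym)
      have "top \<le> (INF k. imp (Op x k) (x k))"
      proof (rule INF_greatest)
        fix k
        have "mult top (Op x k) \<le> x k"
          using contr[of x] by (metis comm unit le_fun_def)
        thus "top \<le> imp (Op x k) (x k)" using res by blast
      qed
      hence "(INF k. imp (Op x k) (x k)) = top" by (rule top_le)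
      hence "Op x i = mult (Op x i) (INF k. imp (Op x k) (x k))" by (simp add: unit)
      also have "\<dots> \<le> (SUP y\<in>range Op. mult (y i) (INF k. imp (y k) (x k)))"
        by (rule SUP_upper) auto
      finally show "Op x i \<le> (SUP y\<in>range Op. mult (y i) (INF k. imp (y k) (x k)))" .
    next
      show "(SUP y\<in>range Op. mult (y i) (INF k. imp (y k) (x k))) \<le> Op x i"
      proof (rule SUP_least)
        fix y assume "y \<in> range Op"
        then obtain a where ya: "y = Op a" by auto
        define d where "d = (INF k. imp (y k) (x k))"
        have "mult (y i) d = mult d (Op (Op a) i)" by (simp add: comm ya idem)
        also have "\<dots> \<le> Op (\<lambda>k. mult d (Op a k)) i" using assms(3) by blast
        also have "\<dots> \<le> Op x i"
        proof -
          have "(\<lambda>k. mult d (Op a k)) \<le> x"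
          proof (rule le_funI)
            fix k
            have "d \<le> imp (Op a k) (x k)" unfolding d_def ya by (rule INF_lower) simp
            thus "mult d (Op a k) \<le> x k" using res by blast
          qed
          hence "Op (\<lambda>k. mult d (Op a k)) \<le> Op x" using mono by (simp add: monoD)
          thus ?thesis by (simp add: le_fun_def)
        qed
        finally show "mult (y i) (INF k. imp (y k) (x k)) \<le> Op x i" unfolding d_def .
      qed
    qed
  qed
  thus ?thesis by blast
qed

end
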